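(* Let $p$ be an odd prime and let $X$ be a finite family of $4p-3$ lattice points in $\mathbb{Z}^2$ (repetitions allowed). Then (a) $-1+(p,X)-(2p,X)+(3p,X)\equiv 0 \pmod p$, and (b) $(p-1,X)-(2p-1,X)+(3p-1,X)\equiv 0 \pmod p$.
   Context: For a finite family $X$ of lattice points in $\mathbb{Z}^2$ (points may repeat; subsets are subfamilies, i.e. subsets of the index set) and an integer $n\ge 0$, $(n,X)$ denotes the number of $n$-element subfamilies of $X$ whose coordinatewise sum is congruent to $(0,0)$ modulo $p$. *)

theory Defs
  imports Main "HOL-Number_Theory.Cong"
begin

text \<open>A finite family of lattice points indexed by the finite set I, given by X :: 'i => int * int.
  subfam_count p n I X is the number of n-element subsets J of the index set I such that
  the coordinatewise sum of X over J is congruent to (0,0) modulo p.\<close>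

definition subfam_count :: "int \<Rightarrow> nat \<Rightarrow> 'i set \<Rightarrow> ('i \<Rightarrow> int \<times> int) \<Rightarrow> nat" where
  "subfam_count p n I X =
     card {J. J \<subseteq> I \<and> card J = n \<and>
              [(\<Sum>j\<in>J. fst (X j)) = 0] (mod p) \<and> [(\<Sum>j\<in>J. snd (X j)) = 0] (mod p)}"

end

theory Submission
  imports Defs "HOL-Number_Theory.Residues"
begin

inductive deg :: "nat \<Rightarrow> ('i set \<Rightarrow> int) \<Rightarrow> bool" where
  const: "deg d (\<lambda>J. c)"
| ind: "deg d g \<Longrightarrow> deg (Suc d) (\<lambda>J. if i \<in> J then g J else 0)"
| add: "deg d f \<Longrightarrow> deg d g \<Longrightarrow> deg d (\<lambda>J. f J + g J)"
| mono: "deg d f \<Longrightarrow> d \<le> e \<Longrightarrow> deg e f"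

lemma deg_ext: "deg d f \<Longrightarrow> (\<And>J. f J = g J) \<Longrightarrow> deg d g"
proof -
  assume "deg d f" "\<And>J. f J = g J"
  then have "f = g" by auto
  with \<open>deg d f\<close> show ?thesis by simp
qed

lemma deg_smult: "deg d f \<Longrightarrow> deg d (\<lambda>J. c * f J)"
proof (induction rule: deg.induct)
  case (const d c')
  then show ?case using deg.const by auto
next
  case (ind d g i)
  have "deg (Suc d) (\<lambda>J. if i \<in> J then c * g J else 0)" by (rule deg.ind) (rule ind.IH)
  then show ?case by (rule deg_ext) simp
next
  case (add d f g)
  have "deg d (\<lambda>J. c * f J + c * g J)" by (rule deg.add) (rule add.IH(1), rule add.IH(2))
  then show ?case by (rule deg_ext) (simp add: distrib_left)
next
  case (mono d f e)
  then show ?case using deg.mono by blast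
qed

lemma deg_mult: "deg d f \<Longrightarrow> deg e g \<Longrightarrow> deg (d+e) (\<lambda>J. f J * g J)"
proof (induction arbitrary: e g rule: deg.induct)
  case (const d c)
  have "deg e (\<lambda>J. c * g J)" by (rule deg_smult) (rule const)
  then show ?case by (rule deg.mono) simp
next
  case (ind d g' i)
  have "deg (Suc (d + e)) (\<lambda>J. if i \<in> J then g' J * g J else 0)"
    by (rule deg.ind) (rule ind.IH[OF ind.prems])
  then have "deg (Suc d + e) (\<lambda>J. if i \<in> J then g' J * g J else 0)" by simp
  then show ?case by (rule deg_ext) auto
next
  case (add d f1 f2)
  have "deg (d+e) (\<lambda>J. f1 J * g J + f2 J * g J)"
    by (rule deg.add) (rule add.IH(1)[OF add.prems], rule add.IH(2)[OF add.prems])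
  then show ?case by (rule deg_ext) (simp add: distrib_right)
next
  case (mono d f e')
  then show ?case using deg.mono by (metis add_le_mono1)
qed

lemma deg_pow: "deg d f \<Longrightarrow> deg (d*k) (\<lambda>J. f J ^ k)"
proof (induction k)
  case 0
  then show ?case using deg.const[of 0 1] by simp
next
  case (Suc k)
  then have "deg (d + d*k) (\<lambda>J. f J * f J ^ k)" using deg_mult by blast
  then show ?case by simp
qed

lemma deg_lin: "finite I \<Longrightarrow> deg 1 (\<lambda>J. \<Sum>k\<in>I. if k \<in> J then c k else 0)"
proof (induction rule: finite_induct)
  case empty
  then show ?case using deg.const[of 1 0] by simp
next
  case (insert x F)
  have "deg (Suc 0) (\<lambda>J. if x \<in> J then c x else 0)" by (rule deg.ind[where g="\<lambda>J. c x", OF deg.const])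
  then have "deg 1 (\<lambda>J. (if x \<in> J then c x else 0) + (\<Sum>k\<in>F. if k \<in> J then c k else 0))"
    using deg.add insert by fastforce
  then show ?case by (rule deg_ext) (simp add: insert)
qed

lemma split_pow:
  assumes "finite A" "a \<notin> A"
  shows "(\<Sum>J\<in>Pow (insert a A). h J) = (\<Sum>J\<in>Pow A. h J) + (\<Sum>J\<in>Pow A. h (insert a J))"
proof -
  have inj: "inj_on (insert a) (Pow A)" unfolding inj_on_def using assms(2) by (metis PowD insert_ident subsetD)
  have d: "Pow A \<inter> insert a ` Pow A = {}" using assms(2) by blast
  have "(\<Sum>J\<in>Pow (insert a A). h J) = (\<Sum>J\<in>Pow A. h J) + (\<Sum>J\<in>insert a ` Pow A. h J)"
    unfolding Pow_insert using assms(1) d by (simp add: sum.union_disjoint)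
  also have "(\<Sum>J\<in>insert a ` Pow A. h J) = (\<Sum>J\<in>Pow A. h (insert a J))"
    using sum.reindex[OF inj] by simp
  finally show ?thesis .
qed

lemma alt_pow: "finite I \<Longrightarrow> I \<noteq> {} \<Longrightarrow> (\<Sum>J\<in>Pow I. (-1::int) ^ card J) = 0"
proof -
  assume f: "finite I" and ne: "I \<noteq> {}"
  then obtain a A where I: "I = insert a A" "a \<notin> A" by (metis Set.set_insert ex_in_conv)
  with f have fA: "finite A" by simp
  have "(\<Sum>J\<in>Pow A. (-1::int) ^ card (insert a J)) = (\<Sum>J\<in>Pow A. - ((-1) ^ card J))"
  proof (rule sum.cong)
    fix J assume "J \<in> Pow A"
    then have "finite J" "a \<notin> J" using fA I by (auto dest: finite_subset)
    then show "(-1::int) ^ card (insert a J) = - ((-1) ^ card J)" by simp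
  qed simp
  then show ?thesis unfolding I(1) split_pow[OF fA I(2)] by (simp add: sum_negf)
qed

lemma alt_zero_gen:
  "deg d g \<Longrightarrow> \<forall>I S. finite I \<longrightarrow> d < card I \<longrightarrow> (\<Sum>J\<in>Pow I. (-1::int) ^ card J * g (S \<union> J)) = 0"
proof (induction rule: deg.induct)
  case (const d c)
  show ?case
  proof (intro allI impI)
    fix I :: "'a set" and S assume "finite I" "d < card I"
    then have "I \<noteq> {}" by auto
    then show "(\<Sum>J\<in>Pow I. (-1::int) ^ card J * c) = 0"
      using alt_pow[OF \<open>finite I\<close>] by (simp add: sum_distrib_right[symmetric])
  qed
next
  case (ind d g i)
  show ?case
  proof (intro allI impI)
    fix I :: "'a set" and S assume fI: "finite I" and cI: "Suc d < card I"
    show "(\<Sum>J\<in>Pow I. (-1::int) ^ card J * (if i \<in> S \<union> J then g (S \<union> J) else 0)) = 0"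
    proof (cases "i \<in> S")
      case True
      then show ?thesis using ind.IH fI cI by simp
    next
      case False
      show ?thesis
      proof (cases "i \<in> I")
        case False
        then have "\<And>J. J \<in> Pow I \<Longrightarrow> i \<notin> S \<union> J" using \<open>i \<notin> S\<close> by auto
        then show ?thesis by (simp add: sum.neutral)
      next
        case True
        define A where "A = I - {i}"
        have I: "I = insert i A" "i \<notin> A" using True A_def by auto
        have fA: "finite A" using fI A_def by simp
        have cA: "d < card A" using cI I fA by simp
        have z1: "(\<Sum>J\<in>Pow A. (-1::int) ^ card J * (if i \<in> S \<union> J then g (S \<union> J) else 0)) = 0"
          using I(2) \<open>i \<notin> S\<close> by (intro sum.neutral) auto
        have "(\<Sum>J\<in>Pow A. (-1::int) ^ card (insert i J) * (if i \<in> S \<union> insert i J then g (S \<union> insert i J) else 0))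
            = (\<Sum>J\<in>Pow A. - ((-1::int) ^ card J * g (insert i S \<union> J)))"
        proof (rule sum.cong)
          fix J assume "J \<in> Pow A"
          then have "finite J" "i \<notin> J" using fA I by (auto dest: finite_subset)
          then show "(-1::int) ^ card (insert i J) * (if i \<in> S \<union> insert i J then g (S \<union> insert i J) else 0)
              = - ((-1::int) ^ card J * g (insert i S \<union> J))" by simp
        qed simp
        also have "\<dots> = 0"
        proof -
          have "(\<Sum>J\<in>Pow A. (-1::int) ^ card J * g (insert i S \<union> J)) = 0" using ind.IH fA cA by blast
          then show ?thesis by (simp add: sum_negf)
        qed
        finally show ?thesis unfolding I(1) split_pow[OF fA I(2)] z1 by simp
      qed
    qed
  qed
next
  case (add d f g)
  show ?case
  proof (intro allI impI)
    fix I :: "'a set" and S assume "finite I" "d < card I"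
    have "(\<Sum>J\<in>Pow I. (-1::int) ^ card J * (f (S \<union> J) + g (S \<union> J)))
      = (\<Sum>J\<in>Pow I. (-1::int) ^ card J * f (S \<union> J)) + (\<Sum>J\<in>Pow I. (-1::int) ^ card J * g (S \<union> J))"
      by (simp add: distrib_left sum.distrib)
    then show "(\<Sum>J\<in>Pow I. (-1::int) ^ card J * (f (S \<union> J) + g (S \<union> J))) = 0"
      using add.IH \<open>finite I\<close> \<open>d < card I\<close> by simp
  qed
next
  case (mono d f e)
  then show ?case by auto
qed

lemma alt_zero: "deg d g \<Longrightarrow> finite I \<Longrightarrow> d < card I \<Longrightarrow> (\<Sum>J\<in>Pow I. (-1::int) ^ card J * g J) = 0"
proof -
  assume a: "deg d g" "finite I" "d < card I"
  have "\<forall>I S. finite I \<longrightarrow> d < card I \<longrightarrow> (\<Sum>J\<in>Pow I. (-1::int) ^ card J * g (S \<union> J)) = 0"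
    by (rule alt_zero_gen[OF a(1)])
  then have "(\<Sum>J\<in>Pow I. (-1::int) ^ card J * g ({} \<union> J)) = 0" using a by blast
  then show ?thesis by simp
qed

lemma fermat_int:
  assumes "prime p" "\<not> int p dvd a"
  shows "[a ^ (p - 1) = 1] (mod int p)"
proof -
  define b where "b = nat (a mod int p)"
  have p0: "int p > 0" using assms(1) prime_gt_0_nat by simp
  have ib: "int b = a mod int p" using p0 by (simp add: b_def)
  have nb: "\<not> p dvd b"
  proof
    assume "p dvd b"
    then have "int p dvd int b" by simp
    then have "int p dvd a mod int p" using ib by simp
    then show False using assms(2) by (simp add: dvd_mod_iff)
  qed
  have "[b ^ (p - 1) = 1] (mod p)" by (rule fermat_theorem[OF assms(1) nb])
  then have 1: "[int b ^ (p - 1) = 1] (mod int p)" by (metis cong_int_iff of_nat_1 of_nat_power)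
  have "[a = int b] (mod int p)" by (simp add: ib cong_def)
  then have "[a ^ (p - 1) = int b ^ (p - 1)] (mod int p)" by (rule cong_pow)
  then show ?thesis using 1 by (rule cong_trans)
qed

lemma fermat_ind:
  assumes "prime p"
  shows "[1 - a ^ (p - 1) = (if int p dvd a then 1 else 0)] (mod int p)"
proof (cases "int p dvd a")
  case True
  have "p - 1 \<noteq> 0" using assms prime_gt_1_nat by fastforce
  then have "a dvd a ^ (p - 1)" by (intro dvd_power) simp
  then have "int p dvd a ^ (p - 1)" using True by (rule dvd_trans[rotated])
  then show ?thesis using True by (simp add: cong_iff_dvd_diff)
next
  case False
  have "[1 - a ^ (p - 1) = 1 - 1] (mod int p)"
    by (rule cong_diff[OF cong_refl fermat_int[OF assms False]])
  then show ?thesis using False by simp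
qed

lemma main:
  fixes p :: nat and cx cy :: "'i \<Rightarrow> int" and e :: int and I :: "'i set"
  assumes pr: "prime p" and fI: "finite I" and cI: "3 * (p - 1) < card I"
  shows "int p dvd (\<Sum>J\<in>Pow I. (-1) ^ card J * (if int p dvd (\<Sum>i\<in>J. cx i) \<and> int p dvd (\<Sum>i\<in>J. cy i)
            \<and> int p dvd (int (card J) + e) then 1 else 0))"
proof -
  define L where "L c e' = (\<lambda>J. (\<Sum>k\<in>I. if k \<in> J then c k else 0) + e')" for c :: "'i \<Rightarrow> int" and e'
  have degL: "deg 1 (L c e')" for c e'
    unfolding L_def by (rule deg.add[OF deg_lin[OF fI] deg.const])
  have degF: "deg (p - 1) (\<lambda>J. 1 - L c e' J ^ (p - 1))" for c e'
  proof -
    have "deg (1 * (p - 1)) (\<lambda>J. L c e' J ^ (p - 1))" by (rule deg_pow[OF degL])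
    then have "deg (p - 1) (\<lambda>J. L c e' J ^ (p - 1))" by simp
    then have "deg (p - 1) (\<lambda>J. (-1) * L c e' J ^ (p - 1))" by (rule deg_smult)
    then have "deg (p - 1) (\<lambda>J. 1 + (-1) * L c e' J ^ (p - 1))" by (rule deg.add[OF deg.const])
    then show ?thesis by (rule deg_ext) simp
  qed
  define G where "G = (\<lambda>J. (1 - L cx 0 J ^ (p - 1)) * (1 - L cy 0 J ^ (p - 1)) * (1 - L (\<lambda>_. 1) e J ^ (p - 1)))"
  have "deg ((p - 1) + (p - 1) + (p - 1)) G"
    unfolding G_def by (rule deg_mult[OF deg_mult[OF degF degF] degF])
  then have sumG: "(\<Sum>J\<in>Pow I. (-1) ^ card J * G J) = 0"
    by (rule alt_zero) (use fI cI in auto)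
  define ind where "ind J = (if int p dvd (\<Sum>i\<in>J. cx i) \<and> int p dvd (\<Sum>i\<in>J. cy i)
            \<and> int p dvd (int (card J) + e) then 1 else (0::int))" for J
  have trm: "int p dvd ((-1) ^ card J * G J - (-1) ^ card J * ind J)" if J: "J \<in> Pow I" for J
  proof -
    have JI: "J \<subseteq> I" using J by simp
    have Lc: "L c e' J = (\<Sum>i\<in>J. c i) + e'" for c e'
    proof -
      have "(\<Sum>k\<in>I. if k \<in> J then c k else 0) = sum c (I \<inter> J)"
        using sum.inter_restrict[OF fI, of c J] by simp
      also have "I \<inter> J = J" using JI by blast
      finally show ?thesis unfolding L_def by simp
    qed
    have "[G J = (if int p dvd (\<Sum>i\<in>J. cx i) then 1 else 0) * (if int p dvd (\<Sum>i\<in>J. cy i) then 1 else 0)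
               * (if int p dvd (int (card J) + e) then 1 else 0)] (mod int p)"
      unfolding G_def Lc add_0_right sum_constant mult_1_right by (intro cong_mult fermat_ind pr) 
    also have "(if int p dvd (\<Sum>i\<in>J. cx i) then 1 else 0) * (if int p dvd (\<Sum>i\<in>J. cy i) then 1 else 0)
               * (if int p dvd (int (card J) + e) then 1 else 0) = ind J"
      unfolding ind_def by simp
    finally have "[(-1) ^ card J * G J = (-1) ^ card J * ind J] (mod int p)"
      by (rule cong_mult[OF cong_refl])
    then show ?thesis by (simp add: cong_iff_dvd_diff)
  qed
  have "int p dvd (\<Sum>J\<in>Pow I. (-1) ^ card J * G J - (-1) ^ card J * ind J)"
    by (rule dvd_sum) (rule trm)
  then have "int p dvd ((\<Sum>J\<in>Pow I. (-1) ^ card J * G J) - (\<Sum>J\<in>Pow I. (-1) ^ card J * ind J))"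
    by (simp add: sum_subtractf)
  then show ?thesis unfolding sumG ind_def by simp
qed

lemma card_cases_a:
  assumes "p > 0" "n \<le> 4 * p - 3"
  shows "int p dvd int n \<longleftrightarrow> (n = 0 \<or> n = p \<or> n = 2 * p \<or> n = 3 * p)"
proof
  assume "int p dvd int n"
  then obtain k where k: "n = p * k" by (auto simp: int_dvd_int_iff elim: dvdE)
  have "p * k < p * 4" using assms k by linarith
  then have "k < 4" by simp
  then have "k = 0 \<or> k = 1 \<or> k = 2 \<or> k = 3" by auto
  then show "n = 0 \<or> n = p \<or> n = 2 * p \<or> n = 3 * p" using k by auto
next
  assume "n = 0 \<or> n = p \<or> n = 2 * p \<or> n = 3 * p"
  then show "int p dvd int n" by auto
qed

lemma card_cases_b:
  assumes "p > 0" "n \<le> 4 * p - 3"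
  shows "int p dvd (int n + 1) \<longleftrightarrow> (n = p - 1 \<or> n = 2 * p - 1 \<or> n = 3 * p - 1)"
proof
  assume "int p dvd (int n + 1)"
  then have "int p dvd int (n + 1)" by (metis of_nat_1 of_nat_add)
  then have "p dvd (n + 1)" by (simp only: int_dvd_int_iff)
  then obtain k where k: "n + 1 = p * k" by (elim dvdE)
  have "p * k < p * 4" using assms k by linarith
  then have "k < 4" by simp
  moreover have "k \<noteq> 0"
  proof
    assume "k = 0"
    with k show False by simp
  qed
  ultimately have "k = 1 \<or> k = 2 \<or> k = 3" by auto
  then show "n = p - 1 \<or> n = 2 * p - 1 \<or> n = 3 * p - 1" using k by auto
next
  assume "n = p - 1 \<or> n = 2 * p - 1 \<or> n = 3 * p - 1"
  then have "int n + 1 = int p \<or> int n + 1 = int p * 2 \<or> int n + 1 = int p * 3" using assms(1) by auto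
  then show "int p dvd (int n + 1)" by auto
qed

lemma count_sum:
  assumes "finite I"
  shows "(\<Sum>J\<in>Pow I. if (int p dvd (\<Sum>i\<in>J. fst (X i)) \<and> int p dvd (\<Sum>i\<in>J. snd (X i))) \<and> card J = n
            then (c::int) else 0) = c * int (subfam_count (int p) n I X)"
proof -
  have "(\<Sum>J\<in>Pow I. if (int p dvd (\<Sum>i\<in>J. fst (X i)) \<and> int p dvd (\<Sum>i\<in>J. snd (X i))) \<and> card J = n
            then c else 0) = (\<Sum>J\<in>{J\<in>Pow I. (int p dvd (\<Sum>i\<in>J. fst (X i)) \<and> int p dvd (\<Sum>i\<in>J. snd (X i))) \<and> card J = n}. c)"
    using sum.inter_filter[of "Pow I" "\<lambda>_. c"] assms by simp
  also have "{J\<in>Pow I. (int p dvd (\<Sum>i\<in>J. fst (X i)) \<and> int p dvd (\<Sum>i\<in>J. snd (X i))) \<and> card J = n}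
     = {J. J \<subseteq> I \<and> card J = n \<and>
              [(\<Sum>j\<in>J. fst (X j)) = 0] (mod int p) \<and> [(\<Sum>j\<in>J. snd (X j)) = 0] (mod int p)}"
    by (auto simp: cong_0_iff)
  finally show ?thesis unfolding subfam_count_def by simp
qed

theorem corollary5:
  fixes p :: nat and I :: "'i set" and X :: "'i \<Rightarrow> int \<times> int"
  assumes "prime p" and "odd p"
    and "finite I" and "card I = 4 * p - 3"
  shows "[- 1 + int (subfam_count (int p) p I X) - int (subfam_count (int p) (2 * p) I X)
            + int (subfam_count (int p) (3 * p) I X) = 0] (mod int p) \<and>
         [int (subfam_count (int p) (p - 1) I X) - int (subfam_count (int p) (2 * p - 1) I X)
            + int (subfam_count (int p) (3 * p - 1) I X) = 0] (mod int p)"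
proof -
  note pr = assms(1) and fI = assms(3)
  have p0: "p > 0" using pr prime_gt_0_nat by blast
  have p2: "p \<ge> 2" using pr prime_ge_2_nat by blast
  have cI: "3 * (p - 1) < card I" using assms(4) p2 by simp
  define P where "P J = (int p dvd (\<Sum>i\<in>J. fst (X i)) \<and> int p dvd (\<Sum>i\<in>J. snd (X i)))" for J
  define C where "C n = int (subfam_count (int p) n I X)" for n
  have cnt: "(\<Sum>J\<in>Pow I. if P J \<and> card J = n then (c::int) else 0) = c * C n" for n c
    unfolding P_def C_def using count_sum[OF fI] by simp
  have cardJ: "card J \<le> 4 * p - 3" if "J \<in> Pow I" for J
    using that assms(4) card_mono[OF fI] by auto
  have s1: "(-1::int) ^ p = -1" using assms(2) by simp
  have s2: "(-1::int) ^ (2 * p) = 1" by simp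
  have s3: "(-1::int) ^ (3 * p) = -1" using assms(2) by simp
  have s4: "(-1::int) ^ (p - 1) = 1" using assms(2) p0 by simp
  have s5: "(-1::int) ^ (2 * p - 1) = -1" using p0 by simp
  have s6: "(-1::int) ^ (3 * p - 1) = 1" using assms(2) p0 by simp
  have C0: "C 0 = 1"
  proof -
    have "{J. J \<subseteq> I \<and> card J = 0 \<and>
              [(\<Sum>j\<in>J. fst (X j)) = 0] (mod int p) \<and> [(\<Sum>j\<in>J. snd (X j)) = 0] (mod int p)} = {{}}"
      using fI by (auto dest: finite_subset)
    then show ?thesis unfolding C_def subfam_count_def by simp
  qed
  have A: "int p dvd (\<Sum>J\<in>Pow I. (-1) ^ card J * (if int p dvd (\<Sum>i\<in>J. fst (X i)) \<and> int p dvd (\<Sum>i\<in>J. snd (X i))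
            \<and> int p dvd (int (card J) + 0) then 1 else 0))"
    by (rule main[OF pr fI cI])
  have "(\<Sum>J\<in>Pow I. (-1::int) ^ card J * (if int p dvd (\<Sum>i\<in>J. fst (X i)) \<and> int p dvd (\<Sum>i\<in>J. snd (X i))
            \<and> int p dvd (int (card J) + 0) then 1 else 0))
      = (\<Sum>J\<in>Pow I. (if P J \<and> card J = 0 then 1 else 0) + (if P J \<and> card J = p then -1 else 0)
             + (if P J \<and> card J = 2 * p then 1 else 0) + (if P J \<and> card J = 3 * p then -1 else 0))"
  proof (rule sum.cong[OF refl])
    fix J assume J: "J \<in> Pow I"
    have e: "int p dvd (int (card J) + 0) \<longleftrightarrow> (card J = 0 \<or> card J = p \<or> card J = 2 * p \<or> card J = 3 * p)"
      using card_cases_a[OF p0 cardJ[OF J]] by simp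
    show "(-1) ^ card J * (if int p dvd (\<Sum>i\<in>J. fst (X i)) \<and> int p dvd (\<Sum>i\<in>J. snd (X i))
            \<and> int p dvd (int (card J) + 0) then 1 else 0)
      = (if P J \<and> card J = 0 then 1 else 0) + (if P J \<and> card J = p then -1 else 0)
             + (if P J \<and> card J = 2 * p then 1 else 0) + (if P J \<and> card J = 3 * p then (-1::int) else 0)"
      unfolding e P_def using p0 s1 s2 s3 by auto
  qed
  also have "\<dots> = 1 * C 0 + (-1) * C p + 1 * C (2 * p) + (-1) * C (3 * p)"
    by (simp only: sum.distrib cnt)
  finally have a: "int p dvd (1 - C p + C (2 * p) - C (3 * p))" using A C0 by simp
  have B: "int p dvd (\<Sum>J\<in>Pow I. (-1) ^ card J * (if int p dvd (\<Sum>i\<in>J. fst (X i)) \<and> int p dvd (\<Sum>i\<in>J. snd (X i))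
            \<and> int p dvd (int (card J) + 1) then 1 else 0))"
    by (rule main[OF pr fI cI])
  have "(\<Sum>J\<in>Pow I. (-1::int) ^ card J * (if int p dvd (\<Sum>i\<in>J. fst (X i)) \<and> int p dvd (\<Sum>i\<in>J. snd (X i))
            \<and> int p dvd (int (card J) + 1) then 1 else 0))
      = (\<Sum>J\<in>Pow I. (if P J \<and> card J = p - 1 then 1 else 0) + (if P J \<and> card J = 2 * p - 1 then -1 else 0)
             + (if P J \<and> card J = 3 * p - 1 then 1 else 0))"
  proof (rule sum.cong[OF refl])
    fix J assume J: "J \<in> Pow I"
    have e: "int p dvd (int (card J) + 1) \<longleftrightarrow> (card J = p - 1 \<or> card J = 2 * p - 1 \<or> card J = 3 * p - 1)"
      using card_cases_b[OF p0 cardJ[OF J]] by simp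
    show "(-1) ^ card J * (if int p dvd (\<Sum>i\<in>J. fst (X i)) \<and> int p dvd (\<Sum>i\<in>J. snd (X i))
            \<and> int p dvd (int (card J) + 1) then 1 else 0)
      = (if P J \<and> card J = p - 1 then 1 else 0) + (if P J \<and> card J = 2 * p - 1 then -1 else 0)
             + (if P J \<and> card J = 3 * p - 1 then (1::int) else 0)"
      unfolding e P_def using p0 s4 s5 s6 by auto
  qed
  also have "\<dots> = 1 * C (p - 1) + (-1) * C (2 * p - 1) + 1 * C (3 * p - 1)"
    by (simp only: sum.distrib cnt)
  finally have b: "int p dvd (C (p - 1) - C (2 * p - 1) + C (3 * p - 1))" using B by simp
  have a': "int p dvd (- 1 + C p - C (2 * p) + C (3 * p))"
  proof -
    have "- 1 + C p - C (2 * p) + C (3 * p) = - (1 - C p + C (2 * p) - C (3 * p))" by simp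
    then show ?thesis using a by (simp only: dvd_minus_iff)
  qed
  show ?thesis using a' b unfolding C_def cong_0_iff by simp
qed
end
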